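(* Let $p$ be a prime, let $M_2(\mathbb{F}_p)$ be the ring of $2\times 2$ matrices over $\mathbb{F}_p$, $GL(2,p)$ its group of invertible matrices, and $\chi(A)=\exp\bigl(2\pi i\,\mathrm{Tr}(A)/p\bigr)$ for $A\in M_2(\mathbb{F}_p)$. Let $I_L$ be a minimal left ideal of $M_2(\mathbb{F}_p)$. Then for every nonzero $B\in I_L$, \[\sum_{u\in GL(2,p)}\chi(uB)=p-p^2.\]
   Context: $\mathrm{Tr}(A)\in\mathbb{F}_p$ denotes the trace of $A$, identified with an integer in $\{0,\dots,p-1\}$ in the exponent. *)

theory Defs
  imports "HOL-Analysis.Analysis" "Berlekamp_Zassenhaus.Finite_Field"
begin

text \<open>M_2(F_p) is rendered as ('p mod_ring)^2^2 where CARD('p) = p is prime.\<close>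

definition left_ideal :: "(('a::comm_ring_1)^2^2) set \<Rightarrow> bool" where
  "left_ideal L \<longleftrightarrow> 0 \<in> L \<and> (\<forall>x\<in>L. \<forall>y\<in>L. x - y \<in> L) \<and>
     (\<forall>r. \<forall>x\<in>L. r ** x \<in> L)"

definition minimal_left_ideal :: "(('a::comm_ring_1)^2^2) set \<Rightarrow> bool" where
  "minimal_left_ideal L \<longleftrightarrow> left_ideal L \<and> L \<noteq> {0} \<and>
     (\<forall>J. left_ideal J \<and> J \<subseteq> L \<longrightarrow> J = {0} \<or> J = L)"

definition chi :: "('p::prime_card mod_ring)^2^2 \<Rightarrow> complex" where
  "chi A = exp (2 * pi * \<i> * of_int (to_int_mod_ring (trace A)) / of_nat CARD('p))"

end

theory Submission
  imports Defs
begin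


definition ee :: "'p::prime_card mod_ring \<Rightarrow> complex" where
 "ee x = exp (2 * pi * \<i> * of_int (to_int_mod_ring x) / of_nat CARD('p))"

lemma card_gt1: "CARD('p::prime_card) > 1"
  using prime_card[where 'a='p] prime_gt_1_nat by blast

lemma sum_ee: "(\<Sum>x\<in>(UNIV::'p::prime_card mod_ring set). ee x) = 0"
proof -
  let ?n = "CARD('p)"
  have n1: "?n > 1" by (rule card_gt1)
  have "(\<Sum>x\<in>(UNIV::'p mod_ring set). ee x) = (\<Sum>k\<in>range (to_int_mod_ring :: 'p mod_ring \<Rightarrow> int). exp (2 * pi * \<i> * of_int k / of_nat ?n))"
    unfolding ee_def by (subst sum.reindex) (auto intro: inj_onI simp: to_int_mod_ring_hom.injectivity)
  also have "\<dots> = (\<Sum>k\<in>int ` {0..<?n}. exp (2 * pi * \<i> * of_int k / of_nat ?n))"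
    unfolding range_to_int_mod_ring image_int_atLeastLessThan by simp
  also have "\<dots> = (\<Sum>k<?n. cis (2 * pi * real k / real ?n))"
    unfolding lessThan_atLeast0 by (subst sum.reindex) (auto simp: cis_conv_exp intro!: sum.cong arg_cong[where f=exp])
  also have "\<dots> = \<Sum>{z::complex. z ^ ?n = 1}"
    using Complex.bij_betw_roots_unity[of ?n] n1 by (intro sum.reindex_bij_betw) simp
  also have "\<dots> = 0" using n1 by (rule sum_roots_unity)
  finally show ?thesis .
qed


definition mk :: "'a::zero \<Rightarrow> 'a \<Rightarrow> 'a \<Rightarrow> 'a \<Rightarrow> 'a^2^2" where
 "mk a b c d = vector [vector [a,b], vector [c,d]]"

lemma mk_nth[simp]: "mk a b c d $1$1 = a" "mk a b c d $1$2 = b" "mk a b c d$2$1 = c" "mk a b c d $2$2 = d"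
  by (simp_all add: mk_def)

lemma mat_eq2: "(A::'a^2^2) = B \<longleftrightarrow> A$1$1=B$1$1 \<and> A$1$2 = B$1$2 \<and> A$2$1 = B$2$1 \<and> A$2$2 = B$2$2"
  by (auto simp: vec_eq_iff forall_2)

lemma mult2: "((A::'a::semiring_1^2^2) ** B) $i$j = A$i$1*B$1$j + A$i$2*B$2$j"
  by (simp add: matrix_matrix_mult_def sum_2)

lemma inv_det: "invertible (A::'a::field^2^2) \<longleftrightarrow> A$1$1 * A$2$2 - A$1$2 * A$2$1 \<noteq> 0"
  by (simp add: invertible_det_nz det_2)

lemma gl_reindex:
  fixes P Q :: "'a::field^'n^'n"
  assumes "invertible P" "invertible Q"
  shows "(\<Sum>u\<in>{u. invertible u}. f (Q ** u ** P)) = (\<Sum>u\<in>{u. invertible u}. f u)"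
proof -
  obtain P' where P': "P ** P' = mat 1" "P' ** P = mat 1" using assms(1) invertible_def by blast
  obtain Q' where Q': "Q ** Q' = mat 1" "Q' ** Q = mat 1" using assms(2) invertible_def by blast
  have iP': "invertible P'" using P' invertible_def by blast
  have iQ': "invertible Q'" using Q' invertible_def by blast
  have im: "invertible (X ** Y)" if "invertible X" "invertible Y" for X Y :: "'a^'n^'n"
    using that by (simp add: invertible_det_nz det_mul)
  show ?thesis
  proof (rule sum.reindex_bij_witness[where i="\<lambda>u. Q' ** u ** P'" and j="\<lambda>u. Q ** u ** P"])
    fix a show "Q' ** (Q ** a ** P) ** P' = a"
      by (metis P'(1) Q'(2) matrix_mul_assoc matrix_mul_lid matrix_mul_rid)
  next
    fix a show "Q ** (Q' ** a ** P') ** P = a"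
      by (metis P'(2) Q'(1) matrix_mul_assoc matrix_mul_lid matrix_mul_rid)
  qed (auto intro!: im assms iP' iQ')
qed

lemma nf1:
  fixes B :: "'a::field^2^2"
  assumes "B$1$1 * B$2$2 - B$1$2 * B$2$1 = 0" "B$1$1 \<noteq> 0"
  shows "\<exists>(P::'a^2^2) (Q::'a^2^2). invertible P \<and> invertible Q \<and> P ** B ** Q = mk 1 0 0 0"
proof -
  define p q r s where "p = B$1$1" "q = B$1$2" "r = B$2$1" "s = B$2$2"
  have ps: "p * s = q * r" "p \<noteq> 0" using assms unfolding p_q_r_s_def by (auto simp: algebra_simps)
  have s: "s = q * r / p" using ps by (simp add: field_simps)
  show ?thesis
    apply (rule exI[of _ "mk (1/p) 0 (-r/p) 1"], rule exI[of _ "mk 1 (-q/p) 0 1"])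
    using ps(2) unfolding mat_eq2 inv_det mult2 p_q_r_s_def[symmetric] s
    by (simp add: field_simps)
qed

lemma nf0:
  fixes B :: "'a::field^2^2"
  assumes "B \<noteq> 0"
  shows "\<exists>(P::'a^2^2) (Q::'a^2^2). invertible P \<and> invertible Q \<and> (P ** B ** Q)$1$1 \<noteq> 0"
proof -
  let ?S = "mk 0 1 1 (0::'a)" and ?I = "mk 1 0 0 (1::'a)"
  have iS: "invertible ?S" "invertible ?I" by (simp_all add: inv_det)
  have "B$1$1 \<noteq> 0 \<or> B$1$2 \<noteq> 0 \<or> B$2$1 \<noteq> 0 \<or> B$2$2 \<noteq> 0"
    using assms by (auto simp: mat_eq2)
  moreover have "(?I ** B ** ?I)$1$1 = B$1$1" "(?I ** B ** ?S)$1$1 = B$1$2"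
    "(?S ** B ** ?I)$1$1 = B$2$1" "(?S ** B ** ?S)$1$1 = B$2$2" by (simp_all add: mult2)
  ultimately show ?thesis using iS
    apply (elim disjE)
    subgoal by (rule exI[of _ ?I], rule exI[of _ ?I]) simp
    subgoal by (rule exI[of _ ?I], rule exI[of _ ?S]) simp
    subgoal by (rule exI[of _ ?S], rule exI[of _ ?I]) simp
    subgoal by (rule exI[of _ ?S], rule exI[of _ ?S]) simp
    done
qed

lemma ideal_sing:
  fixes IL :: "('a::field^2^2) set"
  assumes "minimal_left_ideal IL" "B \<in> IL"
  shows "\<not> invertible B"
proof
  assume "invertible B"
  then obtain B' where B': "B' ** B = mat 1" using invertible_def by blast
  have li: "left_ideal IL" using assms(1) minimal_left_ideal_def by blast
  have all: "X \<in> IL" for X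
  proof -
    have "X = (X ** B') ** B" by (metis B' matrix_mul_assoc matrix_mul_rid)
    then show ?thesis using li assms(2) unfolding left_ideal_def by metis
  qed
  define E where "E = mk 1 0 0 (0::'a)"
  define J :: "('a^2^2) set" where "J = range (\<lambda>r. r ** E)"
  have "left_ideal J" unfolding left_ideal_def J_def
  proof (intro conjI ballI allI)
    show "0 \<in> range (\<lambda>r. r ** E)" by (rule range_eqI[where x=0]) (simp add: mat_eq2 mult2)
  next
    fix x y :: "'a^2^2" assume "x \<in> range (\<lambda>r. r ** E)" "y \<in> range (\<lambda>r. r ** E)"
    then obtain a b where "x = a ** E" "y = b ** E" by blast
    then show "x - y \<in> range (\<lambda>r. r ** E)"
      by (intro range_eqI[where x="a - b"]) (simp add: mat_eq2 mult2 algebra_simps)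
  next
    fix r x :: "'a^2^2" assume "x \<in> range (\<lambda>r. r ** E)"
    then obtain a where "x = a ** E" by blast
    then show "r ** x \<in> range (\<lambda>r. r ** E)" by (metis matrix_mul_assoc rangeI)
  qed
  moreover have "J \<subseteq> IL" using all by blast
  ultimately have "J = {0} \<or> J = IL" using assms(1) minimal_left_ideal_def by blast
  moreover have "E \<in> J" unfolding J_def by (rule range_eqI[where x="mat 1"]) simp
  moreover have "E \<noteq> 0" by (simp add: E_def mat_eq2)
  moreover have "mat 1 \<notin> J" unfolding J_def E_def by (auto simp: mat_eq2 mult2 mat_def)
  ultimately show False using all by blast
qed



lemma mk_eta[simp]: "mk (A$1$1) (A$1$2) (A$2$1) (A$2$2) = A"
  by (simp add: mat_eq2)

lemma sum_ne: "(\<Sum>x\<in>(UNIV::'p::prime_card mod_ring set). if x \<noteq> c then 1 else 0 :: complex) = of_nat CARD('p) - 1"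
proof -
  have "(\<Sum>x\<in>(UNIV::'p mod_ring set). if x \<noteq> c then 1 else 0 :: complex)
     = (\<Sum>x\<in>(UNIV::'p mod_ring set). 1 - (if x = c then 1 else 0))"
    by (intro sum.cong) auto
  also have "\<dots> = of_nat CARD('p) - 1" by (simp add: sum_subtractf)
  finally show ?thesis .
qed

lemma K_nz:
  assumes "(a::'p::prime_card mod_ring) \<noteq> 0"
  shows "(\<Sum>b\<in>UNIV. \<Sum>c\<in>UNIV. \<Sum>d\<in>UNIV. if a*d - b*c \<noteq> 0 then 1 else 0 :: complex)
     = (of_nat CARD('p))^2 * (of_nat CARD('p) - 1)"
proof -
  have "(\<Sum>d\<in>UNIV. if a*d - b*c \<noteq> 0 then 1 else 0 :: complex) = of_nat CARD('p) - 1" for b c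
  proof -
    have "(\<Sum>d\<in>UNIV. if a*d - b*c \<noteq> 0 then 1 else 0 :: complex) = (\<Sum>d\<in>UNIV. if d \<noteq> b*c/a then 1 else 0)"
      using assms by (intro sum.cong) (auto simp: field_simps)
    then show ?thesis by (simp add: sum_ne)
  qed
  then show ?thesis by (simp add: power2_eq_square)
qed

lemma K_z:
  "(\<Sum>b\<in>UNIV. \<Sum>c\<in>UNIV. \<Sum>d\<in>UNIV. if (0::'p::prime_card mod_ring)*d - b*c \<noteq> 0 then 1 else 0 :: complex)
     = of_nat CARD('p) * (of_nat CARD('p) - 1)^2"
proof -
  have "(\<Sum>c\<in>UNIV. \<Sum>d\<in>UNIV. if (0::'p mod_ring)*d - b*c \<noteq> 0 then 1 else 0 :: complex)
       = of_nat CARD('p) * (if b \<noteq> 0 then of_nat CARD('p) - 1 else 0)" for b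
  proof (cases "b = 0")
    case False
    then have "(\<Sum>c\<in>UNIV. \<Sum>d\<in>UNIV. if (0::'p mod_ring)*d - b*c \<noteq> 0 then 1 else 0 :: complex)
       = (\<Sum>c\<in>UNIV. of_nat CARD('p) * (if (c::'p mod_ring) \<noteq> 0 then 1 else 0))"
      by (intro sum.cong) auto
    also have "\<dots> = of_nat CARD('p) * (of_nat CARD('p) - 1)"
      by (simp add: sum_distrib_left[symmetric] sum_ne del: sum_distrib_left)
    finally show ?thesis using False by simp
  qed simp
  then have "(\<Sum>b\<in>UNIV. \<Sum>c\<in>UNIV. \<Sum>d\<in>UNIV. if (0::'p mod_ring)*d - b*c \<noteq> 0 then 1 else 0 :: complex)
     = (\<Sum>b\<in>UNIV. of_nat CARD('p) * ((of_nat CARD('p) - 1) * (if (b::'p mod_ring) \<noteq> 0 then 1 else 0)))"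
    by (intro sum.cong) auto
  also have "\<dots> = of_nat CARD('p) * ((of_nat CARD('p) - 1) * (of_nat CARD('p) - 1))"
    by (simp only: sum_distrib_left[symmetric] sum_ne)
  finally show ?thesis by (simp add: power2_eq_square)
qed

lemma ee0: "ee (0::'p::prime_card mod_ring) = 1"
  unfolding ee_def by simp

lemma core: "(\<Sum>u\<in>{u :: ('p::prime_card mod_ring)^2^2. invertible u}. ee (u$1$1))
   = of_nat CARD('p) - (of_nat CARD('p))^2"
proof -
  let ?n = "of_nat CARD('p) :: complex"
  let ?X = "?n^2 * (?n - 1)" and ?Y = "?n * (?n - 1)^2 - ?n^2 * (?n - 1)"
  define F where "F = (\<lambda>u::('p mod_ring)^2^2. if u$1$1*u$2$2 - u$1$2*u$2$1 \<noteq> 0 then ee (u$1$1) else 0)"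
  have "(\<Sum>u\<in>{u :: ('p mod_ring)^2^2. invertible u}. ee (u$1$1)) = (\<Sum>u\<in>UNIV. F u)"
    unfolding F_def inv_det by (subst sum.inter_filter[symmetric]) auto
  also have "\<dots> = (\<Sum>(a,b,c,d)\<in>UNIV. F (mk a b c d))"
    by (rule sum.reindex_bij_witness[where j="\<lambda>u. (u$1$1,u$1$2,u$2$1,u$2$2)" and i="\<lambda>(a,b,c,d). mk a b c d"])
       (auto simp: mat_eq2)
  also have "\<dots> = (\<Sum>a\<in>(UNIV::'p mod_ring set). \<Sum>b\<in>UNIV. \<Sum>c\<in>UNIV. \<Sum>d\<in>UNIV. F (mk a b c d))"
  proof -
    have U: "(UNIV :: ('p mod_ring \<times> 'p mod_ring \<times> 'p mod_ring \<times> 'p mod_ring) set) = UNIV \<times> (UNIV \<times> (UNIV \<times> UNIV))"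
      by simp
    show ?thesis unfolding U by (simp only: sum.cartesian_product)
  qed
  also have "\<dots> = (\<Sum>a\<in>(UNIV::'p mod_ring set). ee a * (\<Sum>b\<in>UNIV. \<Sum>c\<in>UNIV. \<Sum>d\<in>UNIV. if a*d - b*c \<noteq> 0 then 1 else 0))"
  proof -
    have "F (mk a b c d) = ee a * (if a*d - b*c \<noteq> 0 then 1 else 0)" for a b c d
      unfolding F_def by simp
    then show ?thesis by (simp only: sum_distrib_left)
  qed
  also have "\<dots> = (\<Sum>a\<in>(UNIV::'p mod_ring set). ee a * ?X + (if a = 0 then ee (0::'p mod_ring) * ?Y else 0))"
  proof (rule sum.cong[OF refl])
    fix a :: "'p mod_ring"
    show "ee a * (\<Sum>b\<in>UNIV. \<Sum>c\<in>UNIV. \<Sum>d\<in>UNIV. if a*d - b*c \<noteq> 0 then 1 else 0) = ee a * ?X + (if a = 0 then ee (0::'p mod_ring) * ?Y else 0)"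
    proof (cases "a = 0")
      case True
      show ?thesis unfolding True K_z by (simp add: algebra_simps)
    next
      case False
      show ?thesis unfolding K_nz[OF False] using False by simp
    qed
  qed
  also have "\<dots> = (\<Sum>a\<in>(UNIV::'p mod_ring set). ee a) * ?X + ee (0::'p mod_ring) * ?Y"
    by (simp only: sum.distrib sum_distrib_right[symmetric] sum.delta finite UNIV_I if_True)
  also have "\<dots> = ?n - ?n^2"
    unfolding sum_ee ee0 by (simp add: power2_eq_square algebra_simps)
  finally show ?thesis .
qed


lemma chi_comm: "chi (X ** Y) = chi (Y ** X)"
  unfolding chi_def by (subst trace_mul_sym) (rule refl)

lemma tr_E: "trace (u ** mk 1 0 0 (0::'a::comm_ring_1)) = u$1$1"
  unfolding trace_def sum_2 mult2 by simp

lemma chi_E: "chi (u ** mk 1 0 0 0) = ee (u$1$1)"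
  unfolding chi_def ee_def tr_E ..

theorem theorem2p4:
  fixes IL :: "(('p::prime_card mod_ring)^2^2) set" and B :: "('p mod_ring)^2^2"
  assumes "minimal_left_ideal IL" and "B \<in> IL" and "B \<noteq> 0"
  shows "(\<Sum>u\<in>{u :: ('p mod_ring)^2^2. invertible u}. chi (u ** B))
           = of_nat CARD('p) - (of_nat CARD('p))^2"
proof -
  have sing: "\<not> invertible B" using ideal_sing assms(1,2) by blast
  then have dB: "det B = 0" by (simp add: invertible_det_nz)
  obtain P0 Q0 :: "('p mod_ring)^2^2" where P0: "invertible P0" "invertible Q0" "(P0 ** B ** Q0)$1$1 \<noteq> 0"
    using nf0[OF assms(3)] by blast
  define B1 where "B1 = P0 ** B ** Q0"
  have "det B1 = 0" unfolding B1_def by (simp add: det_mul dB)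
  then have "B1$1$1 * B1$2$2 - B1$1$2 * B1$2$1 = 0" by (simp add: det_2)
  then obtain P1 Q1 :: "('p mod_ring)^2^2" where P1: "invertible P1" "invertible Q1" "P1 ** B1 ** Q1 = mk 1 0 0 0"
    using nf1[of B1] P0(3) unfolding B1_def[symmetric] by blast
  define P where "P = P1 ** P0"
  define Q where "Q = Q0 ** Q1"
  have iP: "invertible P" "invertible Q" unfolding P_def Q_def using P0 P1
    by (simp_all add: invertible_det_nz det_mul)
  have PBQ: "P ** B ** Q = mk 1 0 0 0"
  proof -
    have "P ** B ** Q = P1 ** (P0 ** B ** Q0) ** Q1" unfolding P_def Q_def by (simp only: matrix_mul_assoc)
    then show ?thesis using P1(3) unfolding B1_def by simp
  qed
  obtain P' where P': "P ** P' = mat 1" "P' ** P = mat 1" using iP(1) invertible_def by blast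
  obtain Q' where Q': "Q ** Q' = mat 1" "Q' ** Q = mat 1" using iP(2) invertible_def by blast
  have iP': "invertible P'" "invertible Q'" using P' Q' invertible_def by blast+
  have BB: "B = P' ** mk 1 0 0 0 ** Q'"
  proof -
    have "P' ** (P ** B ** Q) ** Q' = (P' ** P) ** B ** (Q ** Q')" by (simp only: matrix_mul_assoc)
    then show ?thesis using PBQ P'(2) Q'(1) by simp
  qed
  have "(\<Sum>u\<in>{u :: ('p mod_ring)^2^2. invertible u}. chi (u ** B))
      = (\<Sum>u\<in>{u :: ('p mod_ring)^2^2. invertible u}. chi ((Q' ** u ** P') ** mk 1 0 0 0))"
  proof (intro sum.cong refl)
    fix u :: "('p mod_ring)^2^2"
    have "chi (u ** B) = chi ((u ** P' ** mk 1 0 0 0) ** Q')" unfolding BB by (simp only: matrix_mul_assoc)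
    also have "\<dots> = chi (Q' ** (u ** P' ** mk 1 0 0 0))" by (rule chi_comm)
    finally show "chi (u ** B) = chi ((Q' ** u ** P') ** mk 1 0 0 0)" by (simp only: matrix_mul_assoc)
  qed
  also have "\<dots> = (\<Sum>u\<in>{u :: ('p mod_ring)^2^2. invertible u}. chi (u ** mk 1 0 0 0))"
    by (rule gl_reindex[OF iP'(1) iP'(2), where f="\<lambda>u. chi (u ** mk 1 0 0 0)"])
  also have "\<dots> = (\<Sum>u\<in>{u :: ('p mod_ring)^2^2. invertible u}. ee (u$1$1))"
    by (simp add: chi_E)
  also have "\<dots> = of_nat CARD('p) - (of_nat CARD('p))^2" by (rule core)
  finally show ?thesis .
qed


end
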